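(* Let $n\ge1$. The friendship graph $f_n$ is $(a,d)$-distance antimagic for some integers $a$ and $d\ge0$ if and only if $n=1$ or $n=2$.
   Context: The friendship graph $f_n$ is obtained by identifying one vertex from each of $n$ copies of $K_3$: its vertices are $x_0,x_1,\dots,x_{2n}$ and, for $i=1,\dots,n$, the vertices $x_0,x_{2i-1},x_{2i}$ form a triangle; these are all the edges. For a graph $G=(V,E)$ with $v=|V|$ and a bijection $f:V\to\{1,\dots,v\}$, the vertex-weight of $x$ is $w(x)=\sum_{y\in N(x)}f(y)$ with $N(x)$ the set of neighbours of $x$. For integers $a$ and $d\ge0$, $f$ is an $(a,d)$-distance antimagic labeling if the multiset of vertex-weights equals $\{a,a+d,\dots,a+(v-1)d\}$; $G$ is $(a,d)$-distance antimagic if it admits such a labeling. *)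

theory Defs
  imports Main "HOL-Library.Multiset"
begin

definition nbhd :: "'v set \<Rightarrow> ('v \<Rightarrow> 'v \<Rightarrow> bool) \<Rightarrow> 'v \<Rightarrow> 'v set" where
  "nbhd V E x = {y \<in> V. E x y}"

definition vweight :: "'v set \<Rightarrow> ('v \<Rightarrow> 'v \<Rightarrow> bool) \<Rightarrow> ('v \<Rightarrow> nat) \<Rightarrow> 'v \<Rightarrow> int" where
  "vweight V E f x = (\<Sum>y\<in>nbhd V E x. int (f y))"

definition distance_antimagic_labeling ::
  "'v set \<Rightarrow> ('v \<Rightarrow> 'v \<Rightarrow> bool) \<Rightarrow> ('v \<Rightarrow> nat) \<Rightarrow> int \<Rightarrow> int \<Rightarrow> bool" where
  "distance_antimagic_labeling V E f a d \<longleftrightarrow>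
     d \<ge> 0 \<and> bij_betw f V {1..card V} \<and>
     image_mset (vweight V E f) (mset_set V)
       = image_mset (\<lambda>k. a + int k * d) (mset [0..<card V])"

definition distance_antimagic ::
  "'v set \<Rightarrow> ('v \<Rightarrow> 'v \<Rightarrow> bool) \<Rightarrow> int \<Rightarrow> int \<Rightarrow> bool" where
  "distance_antimagic V E a d \<longleftrightarrow> (\<exists>f. distance_antimagic_labeling V E f a d)"

text \<open>Friendship graph f_n: vertices x_0,...,x_{2n} encoded as 0..2n;
  x_0 adjacent to all others, and x_{2i-1} adjacent to x_{2i} for i=1..n.\<close>

definition friendship_vertices :: "nat \<Rightarrow> nat set" where
  "friendship_vertices n = {0..2*n}"

definition friendship_adj :: "nat \<Rightarrow> nat \<Rightarrow> nat \<Rightarrow> bool" where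
  "friendship_adj n x y \<longleftrightarrow>
     x \<le> 2*n \<and> y \<le> 2*n \<and> x \<noteq> y \<and>
     (x = 0 \<or> y = 0 \<or> (\<exists>i\<in>{1..n}. {x, y} = {2*i - 1, 2*i}))"

end

theory Submission
  imports Defs
begin

definition pp :: "nat \<Rightarrow> nat" where "pp x = (if odd x then x+1 else x-1)"

lemma nb0: "nbhd (friendship_vertices n) (friendship_adj n) 0 = {1..2*n}"
  unfolding nbhd_def friendship_vertices_def friendship_adj_def by auto

lemma nbx: assumes "x \<in> {1..2*n}"
  shows "nbhd (friendship_vertices n) (friendship_adj n) x = {0, pp x}"
proof (rule set_eqI)
  fix y
  show "y \<in> nbhd (friendship_vertices n) (friendship_adj n) x \<longleftrightarrow> y \<in> {0, pp x}"
  proof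
    assume "y \<in> nbhd (friendship_vertices n) (friendship_adj n) x"
    hence h: "y \<le> 2*n" "y \<noteq> x" "y = 0 \<or> (\<exists>i\<in>{1..n}. {x, y} = {2*i - 1, 2*i})"
      using assms unfolding nbhd_def friendship_vertices_def friendship_adj_def by auto
    show "y \<in> {0, pp x}"
    proof (cases "y = 0")
      case False
      then obtain i where i: "i \<in> {1..n}" "{x, y} = {2*i - 1, 2*i}" using h by auto
      hence "(x = 2*i-1 \<and> y = 2*i) \<or> (x = 2*i \<and> y = 2*i-1)" using h(2) by (auto simp: doubleton_eq_iff)
      thus ?thesis using i(1) unfolding pp_def by auto
    qed simp
  next
    assume "y \<in> {0, pp x}"
    thus "y \<in> nbhd (friendship_vertices n) (friendship_adj n) x"
    proof
      assume "y = 0" thus ?thesis using assms unfolding nbhd_def friendship_vertices_def friendship_adj_def by auto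
    next
      assume "y \<in> {pp x}"
      hence y: "y = pp x" by simp
      show ?thesis
      proof (cases "odd x")
        case True
        then obtain i where xi: "x = 2*i+1" by (meson oddE)
        have "{x, y} = {2*(i+1) - 1, 2*(i+1)}" "i+1 \<in> {1..n}" using xi y True assms by (auto simp: pp_def)
        thus ?thesis using y True assms xi unfolding nbhd_def friendship_vertices_def friendship_adj_def pp_def
          by (auto intro!: bexI[of _ "i+1"])
      next
        case False
        then obtain i where xi: "x = 2*i" by (meson evenE)
        have "{x, y} = {2*i - 1, 2*i}" "i \<in> {1..n}" using xi y False assms by (auto simp: pp_def)
        thus ?thesis using y False assms xi unfolding nbhd_def friendship_vertices_def friendship_adj_def pp_def
          by (auto intro!: bexI[of _ "i"])
      qed
    qed
  qed
qed

lemma pp_props: assumes "x \<in> {1..2*n}" shows "pp x \<in> {1..2*n}" "pp (pp x) = x" "pp x \<noteq> 0" "pp x \<noteq> x"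
proof -
  show "pp x \<in> {1..2*n}" using assms unfolding pp_def by (auto; presburger)
  show "pp (pp x) = x" using assms unfolding pp_def by (cases "odd x") (auto simp: odd_pos)
  show "pp x \<noteq> 0" using assms unfolding pp_def by (cases "odd x") auto
  show "pp x \<noteq> x" using assms unfolding pp_def by (cases "odd x") auto
qed

lemma w0: "vweight (friendship_vertices n) (friendship_adj n) f 0 = (\<Sum>y\<in>{1..2*n}. int (f y))"
  unfolding vweight_def nb0 by simp

lemma wx: assumes "x \<in> {1..2*n}"
  shows "vweight (friendship_vertices n) (friendship_adj n) f x = int (f 0) + int (f (pp x))"
  unfolding vweight_def nbx[OF assms] using pp_props[OF assms] by simp

lemma wx': "1 \<le> x \<Longrightarrow> x \<le> 2*n \<Longrightarrow> vweight (friendship_vertices n) (friendship_adj n) f x = int (f 0) + int (f (pp x))"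
  using wx by simp

lemma gauss: "(\<Sum>k\<in>{1..m}. int k) = int m * (int m + 1) div 2"
  by (induction m) (auto simp: atLeastAtMostSuc_conv algebra_simps)

lemma ex1: "distance_antimagic (friendship_vertices 1) (friendship_adj 1) 3 1"
proof -
  define f :: "nat \<Rightarrow> nat" where "f x = (if x = 0 then 2 else if x = 1 then 1 else 3)" for x
  have V: "friendship_vertices 1 = set [0,1,2]" by (auto simp: friendship_vertices_def)
  have b: "bij_betw f (friendship_vertices 1) {1..card (friendship_vertices 1)}"
    unfolding V by (auto simp: bij_betw_def f_def)
  have w: "vweight (friendship_vertices 1) (friendship_adj 1) f 0 = 4"
          "vweight (friendship_vertices 1) (friendship_adj 1) f 1 = 5"
          "vweight (friendship_vertices 1) (friendship_adj 1) f 2 = 3"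
    by (simp_all add: w0 wx' pp_def f_def eval_nat_numeral atLeastAtMostSuc_conv)
  show ?thesis unfolding distance_antimagic_def distance_antimagic_labeling_def
    apply (rule exI[of _ f])
    using b w unfolding V by (simp add: mset_set_set upt_rec del: mset_upt)
qed

lemma ex2: "distance_antimagic (friendship_vertices 2) (friendship_adj 2) 6 1"
proof -
  define f :: "nat \<Rightarrow> nat" where "f x = (if x = 0 then 5 else x)" for x
  have V: "friendship_vertices 2 = set [0,1,2,3,4]" by (auto simp: friendship_vertices_def)
  have b: "bij_betw f (friendship_vertices 2) {1..card (friendship_vertices 2)}"
    unfolding V by (auto simp: bij_betw_def f_def)
  have w: "vweight (friendship_vertices 2) (friendship_adj 2) f 0 = 10"
          "vweight (friendship_vertices 2) (friendship_adj 2) f 1 = 7"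
          "vweight (friendship_vertices 2) (friendship_adj 2) f 2 = 6"
          "vweight (friendship_vertices 2) (friendship_adj 2) f 3 = 9"
          "vweight (friendship_vertices 2) (friendship_adj 2) f 4 = 8"
    by (simp_all add: w0 wx' pp_def f_def eval_nat_numeral atLeastAtMostSuc_conv) presburger+
  show ?thesis unfolding distance_antimagic_def distance_antimagic_labeling_def
    apply (rule exI[of _ f])
    using b w unfolding V by (simp add: mset_set_set upt_rec del: mset_upt)
qed
lemma arith_core:
  fixes N c a e :: int
  assumes N: "N \<ge> 3" and c: "1 \<le> c" "c \<le> 2*N+1"
    and e: "e = (2*N+1)*(N+1) - c"
    and F1: "\<And>j. 1 \<le> j \<Longrightarrow> j \<le> 2*N+1 \<Longrightarrow> j \<noteq> c \<Longrightarrow> a \<le> c+j \<and> c+j \<le> a+2*N"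
    and F2: "a \<le> e" "e \<le> a+2*N"
    and F3: "\<And>t. a \<le> t \<Longrightarrow> t \<le> a+2*N \<Longrightarrow> t = e \<or> (\<exists>j. 1 \<le> j \<and> j \<le> 2*N+1 \<and> j \<noteq> c \<and> t = c+j)"
    and F4: "\<And>j. 1 \<le> j \<Longrightarrow> j \<le> 2*N+1 \<Longrightarrow> j \<noteq> c \<Longrightarrow> e \<noteq> c+j"
  shows False
proof -
  have h0: "(2*N+1)*(N+1) \<ge> (2*N+1)*4" using N by (intro mult_left_mono) auto
  define P where "P = (2*N+1)*(N+1)"
  have h: "P \<ge> 8*N+4" using h0 unfolding P_def by simp
  have e: "e = P - c" using e unfolding P_def .
  consider "c = 1" | "c = 2*N+1" | "c \<noteq> 1" "c \<noteq> 2*N+1" by blast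
  thus False
  proof cases
    case 1
    have "a \<le> 3" using F1[of 2] 1 N by auto
    moreover have "a \<ge> 2" using F1[of "2*N+1"] 1 N by auto
    moreover have "\<not> (3 \<le> e \<and> e \<le> 2*N+2)"
    proof
      assume "3 \<le> e \<and> e \<le> 2*N+2"
      thus False using F4[of "e - 1"] 1 by auto
    qed
    ultimately show False using F2 e h 1 N by linarith
  next
    case 2
    have "a \<le> 2*N+2" using F1[of 1] 2 N by auto
    moreover have "a \<ge> 2*N+1" using F1[of "2*N"] 2 N by auto
    ultimately show False using F2 e h 2 N by linarith
  next
    case 3
    have "a \<le> c+1" using F1[of 1] 3 N by auto
    moreover have "a \<ge> c+1" using F1[of "2*N+1"] 3 c by auto
    ultimately have "a = c+1" by simp
    hence "2*c = e \<or> (\<exists>j. 1 \<le> j \<and> j \<le> 2*N+1 \<and> j \<noteq> c \<and> 2*c = c+j)"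
      using F3[of "2*c"] c by auto
    hence "e = 2*c" by auto
    thus False using e h c N by linarith
  qed
qed
lemma hard:
  assumes n3: "n \<ge> 3"
    and L: "distance_antimagic_labeling (friendship_vertices n) (friendship_adj n) f a d"
  shows False
proof -
  define V where "V = friendship_vertices n"
  define W where "W = vweight (friendship_vertices n) (friendship_adj n) f"
  define g where "g = (\<lambda>k::nat. a + int k * d)"
  have V: "V = {0..2*n}" unfolding V_def friendship_vertices_def by simp
  have cV: "card V = 2*n+1" unfolding V by simp
  have d0: "d \<ge> 0" and bij: "bij_betw f V {1..2*n+1}"
    and ms: "image_mset W (mset_set V) = image_mset g (mset [0..<2*n+1])"
    using L cV unfolding distance_antimagic_labeling_def V_def W_def g_def by auto
  have img: "W ` V = g ` {0..<2*n+1}"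
    using arg_cong[OF ms, of set_mset] unfolding V by (simp del: upt_Suc mset_upt)
  have inj: "inj_on f V" and fV: "f ` V = {1..2*n+1}" using bij by (auto simp: bij_betw_def)
  define c where "c = f 0"
  have c: "c \<in> {1..2*n+1}" unfolding c_def using fV V by auto
  have leaf: "f (pp x) \<in> {1..2*n+1} \<and> f (pp x) \<noteq> c \<and> W x = int c + int (f (pp x))"
    if x: "x \<in> {1..2*n}" for x
  proof -
    have p: "pp x \<in> V" "pp x \<noteq> 0" using pp_props[OF x] V by auto
    have "f (pp x) \<noteq> f 0" using inj p V by (auto dest: inj_onD)
    thus ?thesis using p fV wx[OF x] unfolding W_def c_def by auto
  qed
  have hit: "\<exists>x\<in>{1..2*n}. W x = int c + int j" if j: "j \<in> {1..2*n+1}" "j \<noteq> c" for j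
  proof -
    have "j \<in> f ` V" using j fV by simp
    then obtain y where y: "y \<in> V" "f y = j" by blast
    have "y \<noteq> 0" proof assume "y = 0" thus False using y j unfolding c_def by simp qed
    hence yy: "y \<in> {1..2*n}" using y V by (auto simp: Suc_le_eq)
    show ?thesis using pp_props[OF yy] wx[OF pp_props(1)[OF yy]] y unfolding W_def c_def
      by (intro bexI[of _ "pp y"]) auto
  qed
  have sumV: "(\<Sum>y\<in>V. int (f y)) = (\<Sum>k\<in>{1..2*n+1}. int k)"
    using sum.reindex_bij_betw[OF bij, of int] by simp
  have g2: "(\<Sum>k\<in>{1..2*n+1}. int k) = (2*int n+1)*(int n+1)"
  proof -
    have "(\<Sum>k\<in>{1..2*n+1}. int k) = int (2*n+1) * (int (2*n+1) + 1) div 2" by (rule gauss)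
    also have "int (2*n+1) * (int (2*n+1) + 1) = 2 * ((2*int n+1)*(int n+1))" by (simp add: algebra_simps)
    finally show ?thesis by simp
  qed
  have splitV: "(\<Sum>y\<in>V. int (f y)) = int c + (\<Sum>y\<in>{1..2*n}. int (f y))"
  proof -
    have "V = insert 0 {1..2*n}" unfolding V by auto
    thus ?thesis unfolding c_def by simp
  qed
  define e where "e = W 0"
  have e: "e = (2*int n+1)*(int n+1) - int c"
    using splitV sumV g2 w0 unfolding e_def W_def by simp
  define j0 where "j0 = (if c \<ge> 3 then 1 else (3::nat))"
  have j0: "j0 \<in> {1..2*n+1}" "j0 \<noteq> c" "j0+1 \<in> {1..2*n+1}" "j0+1 \<noteq> c"
    using n3 c unfolding j0_def by auto
  obtain x1 where x1: "x1 \<in> {1..2*n}" "W x1 = int c + int j0" using hit j0 by blast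
  obtain x2 where x2: "x2 \<in> {1..2*n}" "W x2 = int c + int (j0+1)" using hit j0 by blast
  have "W x1 \<in> W ` V" using x1(1) V by (intro imageI) auto
  then obtain k1 where k1: "W x1 = g k1" using img by auto
  have "W x2 \<in> W ` V" using x2(1) V by (intro imageI) auto
  then obtain k2 where k2: "W x2 = g k2" using img by auto
  have "(int k2 - int k1) * d = 1" using x1 x2 k1 k2 unfolding g_def by (simp add: algebra_simps)
  hence d1: "d = 1" using d0 zmult_eq_1_iff by force
  have gI: "g ` {0..<2*n+1} = {a..a+2*int n}"
  proof
    show "g ` {0..<2*n+1} \<subseteq> {a..a+2*int n}" unfolding g_def d1 by auto
    show "{a..a+2*int n} \<subseteq> g ` {0..<2*n+1}"
    proof
      fix t assume t: "t \<in> {a..a+2*int n}"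
      hence "t = g (nat (t - a))" "nat (t - a) \<in> {0..<2*n+1}" unfolding g_def d1 by auto
      thus "t \<in> g ` {0..<2*n+1}" by blast
    qed
  qed
  have WV: "W ` V = {a..a+2*int n}" using img gI by simp
  have injW: "inj_on W V"
    using WV cV by (intro eq_card_imp_inj_on) (auto simp: V)
  show False
  proof (rule arith_core[of "int n" "int c" e a])
    show "int n \<ge> 3" using n3 by simp
    show "1 \<le> int c" "int c \<le> 2*int n+1" using c by auto
    show "e = (2*int n+1)*(int n+1) - int c" by (rule e)
    show "a \<le> e" "e \<le> a + 2*int n" using WV V unfolding e_def by auto
  next
    fix j :: int assume j: "1 \<le> j" "j \<le> 2*int n+1" "j \<noteq> int c"
    have "nat j \<in> {1..2*n+1}" "nat j \<noteq> c" using j by auto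
    then obtain x where x: "x \<in> {1..2*n}" "W x = int c + int (nat j)" using hit by blast
    hence x: "x \<in> {1..2*n}" "W x = int c + j" using j by auto
    have xV: "x \<in> V" using x V by auto
    have "W x \<in> {a..a+2*int n}" unfolding WV[symmetric] using xV by (rule imageI)
    thus "a \<le> int c + j \<and> int c + j \<le> a + 2*int n" using x by simp
    have "W x \<noteq> W 0" proof
      assume "W x = W 0" hence "x = 0" using injW xV V by (auto dest: inj_onD)
      thus False using x by simp
    qed
    thus "e \<noteq> int c + j" using x unfolding e_def by simp
  next
    fix t assume t: "a \<le> t" "t \<le> a + 2*int n"
    hence "t \<in> W ` V" unfolding WV by simp
    then obtain x where x: "x \<in> V" "W x = t" by blast
    show "t = e \<or> (\<exists>j. 1 \<le> j \<and> j \<le> 2*int n+1 \<and> j \<noteq> int c \<and> t = int c + j)"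
    proof (cases "x = 0")
      case True thus ?thesis using x unfolding e_def by simp
    next
      case False
      hence xx: "x \<in> {1..2*n}" using x V by auto
      show ?thesis using leaf[OF xx] x by (intro disjI2 exI[of _ "int (f (pp x))"]) auto
    qed
  qed
qed
theorem mainTheorem15:
  fixes n :: nat
  assumes "n \<ge> 1"
  shows "(\<exists>a d :: int. d \<ge> 0 \<and>
           distance_antimagic (friendship_vertices n) (friendship_adj n) a d)
         \<longleftrightarrow> (n = 1 \<or> n = 2)"
proof
  assume "\<exists>a d :: int. d \<ge> 0 \<and> distance_antimagic (friendship_vertices n) (friendship_adj n) a d"
  then obtain a d f where "distance_antimagic_labeling (friendship_vertices n) (friendship_adj n) f a d"
    unfolding distance_antimagic_def by blast
  hence "\<not> n \<ge> 3" using hard by blast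
  thus "n = 1 \<or> n = 2" using assms by auto
next
  assume "n = 1 \<or> n = 2"
  thus "\<exists>a d :: int. d \<ge> 0 \<and> distance_antimagic (friendship_vertices n) (friendship_adj n) a d"
  proof
    assume "n = 1" thus ?thesis using ex1 by (intro exI[of _ 3] exI[of _ 1]) simp
  next
    assume "n = 2" thus ?thesis using ex2 by (intro exI[of _ 6] exI[of _ 1]) simp
  qed
qed

end
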